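(* Let $Z$ be an $n\times n$ matrix of i.i.d. standard normal entries. There is a universal constant $C>0$ such that $$\mathrm{Var}(\mathrm{TV}(Z)) \leq C\,n(n-1).$$
   Context: $\mathrm{TV}(\theta) = \sum_{(u,v)\in E_n}|\theta_u-\theta_v|$, where $E_n$ is the edge set of the $n\times n$ grid graph on $[n]\times[n]$ (pairs of vertices at $\ell_1$-distance 1). *)

theory Defs
  imports "HOL-Probability.Probability"
begin

definition grid :: "nat \<Rightarrow> (nat \<times> nat) set" where
  "grid n = {1..n} \<times> {1..n}"

definition l1dist :: "nat \<times> nat \<Rightarrow> nat \<times> nat \<Rightarrow> int" where
  "l1dist u v = \<bar>int (fst u) - int (fst v)\<bar> + \<bar>int (snd u) - int (snd v)\<bar>"

text \<open>Edge set E_n: pairs of vertices at l1-distance 1; each (unordered) edge is listed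
  exactly once, oriented so that the coordinate sum increases.\<close>
definition grid_edges :: "nat \<Rightarrow> ((nat \<times> nat) \<times> (nat \<times> nat)) set" where
  "grid_edges n = {(u, v). u \<in> grid n \<and> v \<in> grid n \<and> l1dist u v = 1
                          \<and> fst u + snd u < fst v + snd v}"

definition TV :: "nat \<Rightarrow> (nat \<times> nat \<Rightarrow> real) \<Rightarrow> real" where
  "TV n \<theta> = (\<Sum>(u, v)\<in>grid_edges n. \<bar>\<theta> u - \<theta> v\<bar>)"

definition gauss_matrix :: "nat \<Rightarrow> (nat \<times> nat \<Rightarrow> real) measure" where
  "gauss_matrix n = PiM (grid n) (\<lambda>_. density lborel std_normal_density)"

end

theory Submission
  imports Defs
begin

definition SN :: "real measure" where "SN = density lborel std_normal_density"

lemma SN_prob: "prob_space SN"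
  unfolding SN_def by (rule prob_space_normal_density) simp

lemma sets_SN[simp, measurable_cong]: "sets SN = sets borel"
  unfolding SN_def by simp

lemma SN_sq: "integrable SN (\<lambda>x. x^2)" "integral\<^sup>L SN (\<lambda>x. x^2) = 1"
proof -
  have h: "has_bochner_integral lborel (\<lambda>x. std_normal_density x * x ^ 2) 1"
    using std_normal_moment_even[of 1] by simp
  show "integrable SN (\<lambda>x. x^2)"
    unfolding SN_def
    using h by (subst integrable_density) (auto simp: normal_density_nonneg has_bochner_integral_iff)
  show "integral\<^sup>L SN (\<lambda>x. x^2) = 1"
    unfolding SN_def
    using h by (subst integral_density) (auto simp: normal_density_nonneg has_bochner_integral_iff)
qed

lemma coord_sq:
  assumes "i \<in> I"
  shows "integrable (PiM I (\<lambda>_. SN)) (\<lambda>\<omega>. (\<omega> i)^2)"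
    "integral\<^sup>L (PiM I (\<lambda>_. SN)) (\<lambda>\<omega>. (\<omega> i)^2) = 1"
proof -
  have d: "distr (PiM I (\<lambda>_. SN)) SN (\<lambda>\<omega>. \<omega> i) = SN"
    using distr_PiM_component[of I "\<lambda>_. SN" i] SN_prob assms by simp
  have m: "(\<lambda>\<omega>. \<omega> i) \<in> measurable (PiM I (\<lambda>_. SN)) SN"
    using assms by simp
  show "integrable (PiM I (\<lambda>_. SN)) (\<lambda>\<omega>. (\<omega> i)^2)"
    using integrable_distr_eq[OF m, of "\<lambda>x. x^2"] SN_sq(1) d by simp
  show "integral\<^sup>L (PiM I (\<lambda>_. SN)) (\<lambda>\<omega>. (\<omega> i)^2) = 1"
    using integral_distr[OF m, of "\<lambda>x. x^2"] SN_sq(2) d by simp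
qed

lemma indep_coords:
  assumes "I \<noteq> {}"
  shows "prob_space.indep_vars (PiM I (\<lambda>_. SN)) (\<lambda>_. SN) (\<lambda>i \<omega>. \<omega> i) I"
proof -
  interpret P: prob_space "PiM I (\<lambda>_. SN)"
    by (rule prob_space_PiM) (rule SN_prob)
  have "distr (PiM I (\<lambda>_. SN)) (PiM I (\<lambda>_. SN)) (\<lambda>x. \<lambda>i\<in>I. x i) = distr (PiM I (\<lambda>_. SN)) (PiM I (\<lambda>_. SN)) (\<lambda>x. x)"
    by (rule distr_cong) (auto simp: space_PiM PiE_def extensional_restrict)
  also have "\<dots> = PiM I (\<lambda>_. SN)" by simp
  also have "\<dots> = PiM I (\<lambda>i. distr (PiM I (\<lambda>_. SN)) SN (\<lambda>\<omega>. \<omega> i))"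
    by (rule PiM_cong) (auto intro!: distr_PiM_component[symmetric] SN_prob)
  moreover have rv: "(\<lambda>\<omega>. \<omega> i) \<in> measurable (PiM I (\<lambda>_. SN)) SN" for i
  proof (cases "i \<in> I")
    case True then show ?thesis by simp
  next
    case False
    have "(\<lambda>_. undefined) \<in> measurable (PiM I (\<lambda>_. SN)) SN"
      by (rule measurable_const) (simp add: SN_def)
    then show ?thesis
      by (rule measurable_cong[THEN iffD1, rotated])
         (use False in \<open>auto simp: space_PiM PiE_def extensional_def\<close>)
  qed
  ultimately show ?thesis
    by (subst P.indep_vars_iff_distr_eq_PiM[OF assms]) auto
qed

lemma edge_sq:
  assumes "a \<in> I" "b \<in> I"
  shows "integrable (PiM I (\<lambda>_. SN)) (\<lambda>\<omega>. \<bar>\<omega> a - \<omega> b\<bar>^2)"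
    "integral\<^sup>L (PiM I (\<lambda>_. SN)) (\<lambda>\<omega>. \<bar>\<omega> a - \<omega> b\<bar>^2) \<le> 4"
    "integrable (PiM I (\<lambda>_. SN)) (\<lambda>\<omega>. \<bar>\<omega> a - \<omega> b\<bar>)"
proof -
  let ?M = "PiM I (\<lambda>_. SN)"
  interpret P: prob_space ?M
    by (rule prob_space_PiM) (rule SN_prob)
  have ia: "integrable ?M (\<lambda>\<omega>. (\<omega> a)^2)" and ib: "integrable ?M (\<lambda>\<omega>. (\<omega> b)^2)"
    using coord_sq(1)[OF assms(1)] coord_sq(1)[OF assms(2)] by auto
  have ig: "integrable ?M (\<lambda>\<omega>. 2 * (\<omega> a)^2 + 2 * (\<omega> b)^2)"
    using ia ib by auto
  have bnd: "\<bar>x - y\<bar>^2 \<le> 2 * x^2 + 2 * y^2" for x y :: real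
  proof -
    have "2 * x^2 + 2 * y^2 - \<bar>x - y\<bar>^2 = (x + y)^2"
      by (simp add: power2_eq_square algebra_simps)
    moreover have "(x + y)^2 \<ge> 0" by simp
    ultimately show ?thesis by linarith
  qed
  show i1: "integrable ?M (\<lambda>\<omega>. \<bar>\<omega> a - \<omega> b\<bar>^2)"
    by (rule Bochner_Integration.integrable_bound[OF ig]) (use assms bnd in \<open>auto intro!: AE_I2\<close>)
  have "integral\<^sup>L ?M (\<lambda>\<omega>. \<bar>\<omega> a - \<omega> b\<bar>^2) \<le> integral\<^sup>L ?M (\<lambda>\<omega>. 2 * (\<omega> a)^2 + 2 * (\<omega> b)^2)"
    by (rule integral_mono[OF i1 ig]) (rule bnd)
  also have "\<dots> = 4"
    using ia ib coord_sq(2)[OF assms(1)] coord_sq(2)[OF assms(2)] by simp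
  finally show "integral\<^sup>L ?M (\<lambda>\<omega>. \<bar>\<omega> a - \<omega> b\<bar>^2) \<le> 4" .
  show "integrable ?M (\<lambda>\<omega>. \<bar>\<omega> a - \<omega> b\<bar>)"
    by (rule P.square_integrable_imp_integrable[OF _ i1]) (use assms in simp)
qed

lemma edge_prod:
  assumes "a \<in> I" "b \<in> I" "c \<in> I" "d \<in> I"
  shows "integrable (PiM I (\<lambda>_. SN)) (\<lambda>\<omega>. \<bar>\<omega> a - \<omega> b\<bar> * \<bar>\<omega> c - \<omega> d\<bar>)"
    "integral\<^sup>L (PiM I (\<lambda>_. SN)) (\<lambda>\<omega>. \<bar>\<omega> a - \<omega> b\<bar> * \<bar>\<omega> c - \<omega> d\<bar>) \<le> 4"
proof -
  let ?M = "PiM I (\<lambda>_. SN)"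
  have ig: "integrable ?M (\<lambda>\<omega>. (\<bar>\<omega> a - \<omega> b\<bar>^2 + \<bar>\<omega> c - \<omega> d\<bar>^2) / 2)"
    using edge_sq(1)[of a I b] edge_sq(1)[of c I d] assms by auto
  have bnd: "x * y \<le> (x^2 + y^2) / 2" for x y :: real
    using sum_squares_ge_zero[of "x - y" 0] by (simp add: power2_eq_square algebra_simps)
  have bnd2: "\<bar>\<bar>x\<bar> * \<bar>y\<bar>\<bar> \<le> \<bar>(\<bar>x\<bar>^2 + \<bar>y\<bar>^2) / 2\<bar>" for x y :: real
    using bnd[of "\<bar>x\<bar>" "\<bar>y\<bar>"] by (simp add: abs_mult)
  show i1: "integrable ?M (\<lambda>\<omega>. \<bar>\<omega> a - \<omega> b\<bar> * \<bar>\<omega> c - \<omega> d\<bar>)"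
    by (rule Bochner_Integration.integrable_bound[OF ig]) (use assms bnd2 in \<open>auto intro!: AE_I2\<close>)
  have "integral\<^sup>L ?M (\<lambda>\<omega>. \<bar>\<omega> a - \<omega> b\<bar> * \<bar>\<omega> c - \<omega> d\<bar>) \<le> integral\<^sup>L ?M (\<lambda>\<omega>. (\<bar>\<omega> a - \<omega> b\<bar>^2 + \<bar>\<omega> c - \<omega> d\<bar>^2) / 2)"
    by (rule integral_mono[OF i1 ig]) (rule bnd)
  also have "\<dots> = (integral\<^sup>L ?M (\<lambda>\<omega>. \<bar>\<omega> a - \<omega> b\<bar>^2) + integral\<^sup>L ?M (\<lambda>\<omega>. \<bar>\<omega> c - \<omega> d\<bar>^2)) / 2"
    using edge_sq(1)[of a I b] edge_sq(1)[of c I d] assms by simp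
  also have "\<dots> \<le> 4"
    using edge_sq(2)[of a I b] edge_sq(2)[of c I d] assms by simp
  finally show "integral\<^sup>L ?M (\<lambda>\<omega>. \<bar>\<omega> a - \<omega> b\<bar> * \<bar>\<omega> c - \<omega> d\<bar>) \<le> 4" .
qed

lemma edge_indep:
  assumes "a \<in> I" "b \<in> I" "c \<in> I" "d \<in> I" "{a, b} \<inter> {c, d} = {}"
  shows "integral\<^sup>L (PiM I (\<lambda>_. SN)) (\<lambda>\<omega>. \<bar>\<omega> a - \<omega> b\<bar> * \<bar>\<omega> c - \<omega> d\<bar>)
    = integral\<^sup>L (PiM I (\<lambda>_. SN)) (\<lambda>\<omega>. \<bar>\<omega> a - \<omega> b\<bar>) * integral\<^sup>L (PiM I (\<lambda>_. SN)) (\<lambda>\<omega>. \<bar>\<omega> c - \<omega> d\<bar>)"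
proof -
  let ?M = "PiM I (\<lambda>_. SN)"
  interpret P: prob_space ?M
    by (rule prob_space_PiM) (rule SN_prob)
  have ne: "I \<noteq> {}" using assms by auto
  have iv: "P.indep_var (PiM {a,b} (\<lambda>_. SN)) (\<lambda>\<omega>. restrict (\<lambda>i. \<omega> i) {a,b})
      (PiM {c,d} (\<lambda>_. SN)) (\<lambda>\<omega>. restrict (\<lambda>i. \<omega> i) {c,d})"
    by (rule P.indep_var_restrict[OF indep_coords[OF ne]]) (use assms in auto)
  have m1: "(\<lambda>x. \<bar>x a - x b\<bar>) \<in> borel_measurable (PiM {a,b} (\<lambda>_. SN))" by simp
  have m2: "(\<lambda>x. \<bar>x c - x d\<bar>) \<in> borel_measurable (PiM {c,d} (\<lambda>_. SN))" by simp
  note iv2 = P.indep_var_compose[OF iv m1 m2]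
  have e1: "(\<lambda>x. \<bar>x a - x b\<bar>) \<circ> (\<lambda>\<omega>. restrict (\<lambda>i. \<omega> i) {a,b}) = (\<lambda>\<omega>. \<bar>\<omega> a - \<omega> b\<bar>)"
    by (auto simp: fun_eq_iff)
  have e2: "(\<lambda>x. \<bar>x c - x d\<bar>) \<circ> (\<lambda>\<omega>. restrict (\<lambda>i. \<omega> i) {c,d}) = (\<lambda>\<omega>. \<bar>\<omega> c - \<omega> d\<bar>)"
    by (auto simp: fun_eq_iff)
  have iv3: "P.indep_var borel (\<lambda>\<omega>. \<bar>\<omega> a - \<omega> b\<bar>) borel (\<lambda>\<omega>. \<bar>\<omega> c - \<omega> d\<bar>)"
    using iv2 unfolding e1 e2 .
  show ?thesis
    by (rule P.indep_var_lebesgue_integral[OF iv3 edge_sq(3)[OF assms(1,2)] edge_sq(3)[OF assms(3,4)]])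
qed

lemma edge_shape:
  assumes "(u, v) \<in> grid_edges n"
  shows "v = (fst u + 1, snd u) \<or> v = (fst u, snd u + 1)"
  using assms unfolding grid_edges_def l1dist_def
  by (cases u; cases v) (simp, arith)

lemma edge_in_grid:
  assumes "e \<in> grid_edges n"
  shows "fst e \<in> grid n" "snd e \<in> grid n"
  using assms unfolding grid_edges_def by auto

lemma finite_edges: "finite (grid_edges n)"
proof -
  have "grid_edges n \<subseteq> grid n \<times> grid n" unfolding grid_edges_def by auto
  moreover have "finite (grid n \<times> grid n)" unfolding grid_def by auto
  ultimately show ?thesis by (rule finite_subset)
qed

lemma card_edges: "card (grid_edges n) \<le> 2 * (n * n)"
proof -
  define g :: "(nat \<times> nat) \<times> bool \<Rightarrow> (nat \<times> nat) \<times> (nat \<times> nat)" where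
    "g = (\<lambda>(u, b). if b then (u, (fst u + 1, snd u)) else (u, (fst u, snd u + 1)))"
  have "grid_edges n \<subseteq> g ` (grid n \<times> UNIV)"
  proof
    fix e assume e: "e \<in> grid_edges n"
    obtain u v where uv: "e = (u, v)" by (cases e)
    have u: "u \<in> grid n" using edge_in_grid[OF e] uv by simp
    have "v = (fst u + 1, snd u) \<or> v = (fst u, snd u + 1)" using edge_shape[of u v n] e uv by simp
    then show "e \<in> g ` (grid n \<times> UNIV)"
    proof
      assume "v = (fst u + 1, snd u)"
      then have "e = g (u, True)" using uv by (simp add: g_def)
      then show ?thesis using u by blast
    next
      assume "v = (fst u, snd u + 1)"
      then have "e = g (u, False)" using uv by (simp add: g_def)
      then show ?thesis using u by blast
    qed
  qed
  then have "card (grid_edges n) \<le> card (g ` (grid n \<times> (UNIV :: bool set)))"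
    by (rule card_mono[rotated]) (auto simp: grid_def)
  also have "\<dots> \<le> card (grid n \<times> (UNIV :: bool set))" by (rule card_image_le) (auto simp: grid_def)
  also have "\<dots> = 2 * (n * n)" by (simp add: grid_def card_cartesian_product)
  finally show ?thesis .
qed

lemma edges_small: "n \<le> 1 \<Longrightarrow> grid_edges n = {}"
  unfolding grid_edges_def grid_def l1dist_def by auto

definition touch :: "(nat \<times> nat) \<times> (nat \<times> nat) \<Rightarrow> (nat \<times> nat) \<times> (nat \<times> nat) \<Rightarrow> bool" where
  "touch e f \<longleftrightarrow> {fst e, snd e} \<inter> {fst f, snd f} \<noteq> {}"

lemma touch_card: "card {f \<in> grid_edges n. touch e f} \<le> 8"
proof -
  define g :: "(nat \<times> nat) \<times> bool \<times> bool \<Rightarrow> (nat \<times> nat) \<times> (nat \<times> nat)" where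
    "g = (\<lambda>(w, b, c). if b then (if c then (w, (fst w + 1, snd w)) else (w, (fst w, snd w + 1)))
           else (if c then ((fst w - 1, snd w), w) else ((fst w, snd w - 1), w)))"
  have "{f \<in> grid_edges n. touch e f} \<subseteq> g ` ({fst e, snd e} \<times> UNIV)"
  proof
    fix f assume f: "f \<in> {f \<in> grid_edges n. touch e f}"
    obtain a b where ab: "f = (a, b)" by (cases f)
    have fe: "(a, b) \<in> grid_edges n" and t: "{fst e, snd e} \<inter> {a, b} \<noteq> {}"
      using f ab by (auto simp: touch_def)
    from t obtain w where w: "w \<in> {fst e, snd e}" "w = a \<or> w = b" by blast
    have sh: "b = (fst a + 1, snd a) \<or> b = (fst a, snd a + 1)" using edge_shape[OF fe] .
    have "\<exists>bc. f = g (w, bc)"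
    proof (cases "w = a")
      case True
      from sh show ?thesis
      proof
        assume "b = (fst a + 1, snd a)"
        then have "f = g (w, True, True)" using True ab by (simp add: g_def)
        then show ?thesis by blast
      next
        assume "b = (fst a, snd a + 1)"
        then have "f = g (w, True, False)" using True ab by (simp add: g_def)
        then show ?thesis by blast
      qed
    next
      case False
      then have wb: "w = b" using w by blast
      from sh show ?thesis
      proof
        assume "b = (fst a + 1, snd a)"
        then have "a = (fst b - 1, snd b)" by (cases a) simp
        then have "f = g (w, False, True)" using wb ab by (simp add: g_def)
        then show ?thesis by blast
      next
        assume "b = (fst a, snd a + 1)"
        then have "a = (fst b, snd b - 1)" by (cases a) simp
        then have "f = g (w, False, False)" using wb ab by (simp add: g_def)
        then show ?thesis by blast
      qed
    qed
    then show "f \<in> g ` ({fst e, snd e} \<times> UNIV)" using w by blast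
  qed
  then have "card {f \<in> grid_edges n. touch e f} \<le> card (g ` ({fst e, snd e} \<times> (UNIV :: (bool \<times> bool) set)))"
    by (rule card_mono[rotated]) auto
  also have "\<dots> \<le> card ({fst e, snd e} \<times> (UNIV :: (bool \<times> bool) set))" by (rule card_image_le) auto
  also have "\<dots> \<le> 8" by (simp add: card_cartesian_product card_UNIV_bool card_insert_if)
  finally show ?thesis .
qed

lemma (in prob_space) cov_eq:
  fixes X Y :: "'a \<Rightarrow> real"
  assumes "integrable M X" "integrable M Y" "integrable M (\<lambda>\<omega>. X \<omega> * Y \<omega>)"
  shows "integrable M (\<lambda>\<omega>. (X \<omega> - expectation X) * (Y \<omega> - expectation Y))"
    "expectation (\<lambda>\<omega>. (X \<omega> - expectation X) * (Y \<omega> - expectation Y))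
       = expectation (\<lambda>\<omega>. X \<omega> * Y \<omega>) - expectation X * expectation Y"
proof -
  let ?a = "expectation X" and ?b = "expectation Y"
  have eq: "(\<lambda>\<omega>. (X \<omega> - ?a) * (Y \<omega> - ?b)) = (\<lambda>\<omega>. X \<omega> * Y \<omega> - ?a * Y \<omega> - ?b * X \<omega> + ?a * ?b)"
    by (auto simp: fun_eq_iff algebra_simps)
  show "integrable M (\<lambda>\<omega>. (X \<omega> - ?a) * (Y \<omega> - ?b))"
    unfolding eq using assms by auto
  show "expectation (\<lambda>\<omega>. (X \<omega> - ?a) * (Y \<omega> - ?b)) = expectation (\<lambda>\<omega>. X \<omega> * Y \<omega>) - ?a * ?b"
    unfolding eq using assms by (simp add: prob_space)
qed

lemma var_bound: "prob_space.variance (gauss_matrix n) (\<lambda>Z. TV n Z) \<le> 32 * real (card (grid_edges n))"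
proof -
  let ?M = "PiM (grid n) (\<lambda>_. SN)"
  let ?E = "grid_edges n"
  have GM: "gauss_matrix n = ?M" unfolding gauss_matrix_def SN_def ..
  interpret P: prob_space ?M
    by (rule prob_space_PiM) (rule SN_prob)
  define X where "X e \<omega> = \<bar>\<omega> (fst e) - \<omega> (snd e)\<bar>" for e :: "(nat \<times> nat) \<times> (nat \<times> nat)" and \<omega> :: "nat \<times> nat \<Rightarrow> real"
  define m where "m e = P.expectation (X e)" for e
  have fin: "finite ?E" by (rule finite_edges)
  have intX: "integrable ?M (X e)" if "e \<in> ?E" for e
    unfolding X_def using edge_sq(3)[OF edge_in_grid[OF that]] .
  have intXX: "integrable ?M (\<lambda>\<omega>. X e \<omega> * X f \<omega>)" if "e \<in> ?E" "f \<in> ?E" for e f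
    unfolding X_def using edge_prod(1)[OF edge_in_grid[OF that(1)] edge_in_grid[OF that(2)]] .
  have TVeq: "TV n \<omega> = (\<Sum>e\<in>?E. X e \<omega>)" for \<omega>
    unfolding TV_def X_def by (simp add: case_prod_beta)
  have ES: "P.expectation (TV n) = (\<Sum>e\<in>?E. m e)"
    unfolding TVeq m_def using intX by (simp add: integral_sum)
  have sq: "(TV n \<omega> - P.expectation (TV n))^2 = (\<Sum>e\<in>?E. \<Sum>f\<in>?E. (X e \<omega> - m e) * (X f \<omega> - m f))" for \<omega>
    unfolding ES TVeq by (simp add: power2_eq_square sum_subtractf[symmetric] sum_product)
  have c_int: "integrable ?M (\<lambda>\<omega>. (X e \<omega> - m e) * (X f \<omega> - m f))"
    and c_eq: "P.expectation (\<lambda>\<omega>. (X e \<omega> - m e) * (X f \<omega> - m f)) = P.expectation (\<lambda>\<omega>. X e \<omega> * X f \<omega>) - m e * m f"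
    if "e \<in> ?E" "f \<in> ?E" for e f
    using P.cov_eq[OF intX[OF that(1)] intX[OF that(2)] intXX[OF that]] unfolding m_def by auto
  have c_bnd: "P.expectation (\<lambda>\<omega>. (X e \<omega> - m e) * (X f \<omega> - m f)) \<le> (if touch e f then 4 else 0)"
    if ef: "e \<in> ?E" "f \<in> ?E" for e f
  proof (cases "touch e f")
    case True
    have "m e \<ge> 0" "m f \<ge> 0" unfolding m_def X_def by auto
    moreover have "P.expectation (\<lambda>\<omega>. X e \<omega> * X f \<omega>) \<le> 4"
      unfolding X_def using edge_prod(2)[OF edge_in_grid[OF ef(1)] edge_in_grid[OF ef(2)]] .
    ultimately have "m e * m f \<ge> 0" "P.expectation (\<lambda>\<omega>. X e \<omega> * X f \<omega>) \<le> 4" by simp_all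
    then show ?thesis using True c_eq[OF ef] by simp
  next
    case False
    then have d: "{fst e, snd e} \<inter> {fst f, snd f} = {}" unfolding touch_def by simp
    have "P.expectation (\<lambda>\<omega>. X e \<omega> * X f \<omega>) = m e * m f"
      unfolding X_def m_def using edge_indep[OF edge_in_grid[OF ef(1)] edge_in_grid[OF ef(2)] d] .
    then show ?thesis using False c_eq[OF ef] by simp
  qed
  have "P.variance (TV n) = (\<Sum>e\<in>?E. \<Sum>f\<in>?E. P.expectation (\<lambda>\<omega>. (X e \<omega> - m e) * (X f \<omega> - m f)))"
    unfolding sq using c_int by (simp add: integral_sum)
  also have "\<dots> \<le> (\<Sum>e\<in>?E. \<Sum>f\<in>?E. (if touch e f then 4 else 0))"
    by (intro sum_mono c_bnd)
  also have "\<dots> = (\<Sum>e\<in>?E. 4 * real (card {f \<in> ?E. touch e f}))"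
    using fin by (simp add: sum.inter_filter[symmetric] mult.commute)
  also have "\<dots> \<le> (\<Sum>e\<in>?E. 32)"
    by (intro sum_mono) (use touch_card in simp)
  also have "\<dots> = 32 * real (card ?E)" by simp
  finally show ?thesis unfolding GM .
qed

theorem lemma6p4:
  "\<exists>C>0. \<forall>n::nat. prob_space.variance (gauss_matrix n) (\<lambda>Z. TV n Z)
                     \<le> C * (real n * (real n - 1))"
proof (intro exI[of _ 128] conjI allI)
  fix n :: nat
  have "real (card (grid_edges n)) \<le> 4 * (real n * (real n - 1))"
  proof (cases "n \<le> 1")
    case True
    then show ?thesis using edges_small[OF True] by (cases n) auto
  next
    case False
    then have "real n \<ge> 2" by simp
    then have "2 * (real n * real n) \<le> 4 * (real n * (real n - 1))"
      by (simp add: algebra_simps)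
    moreover have "real (card (grid_edges n)) \<le> 2 * (real n * real n)"
      using card_edges[of n] by (metis of_nat_le_iff of_nat_mult of_nat_numeral)
    ultimately show ?thesis by linarith
  qed
  then show "prob_space.variance (gauss_matrix n) (\<lambda>Z. TV n Z) \<le> 128 * (real n * (real n - 1))"
    using var_bound[of n] by linarith
qed simp

end
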